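(* Let $n$, $r$ and $k$ be positive integers with $n\ge 2r+1$, and suppose $\binom{n-r}{r}\ge k$ (so that $\gamma_{\times k,t}(K(n,r))$ is defined). Then $$\gamma_{\times k,t}(K(n,r))\ \ge\ \gamma_{\times k,t}(K(n+1,r)).$$
   Context: For integers $n\ge 2r$, the Kneser graph $K(n,r)$ has as vertices the $r$-element subsets of $[n]=\{1,\dots,n\}$, two vertices being adjacent iff they are disjoint sets. For a graph $G$ and positive integer $k$, a set $D\subseteq V(G)$ is a $k$-tuple total dominating set if $|N_G(u)\cap D|\ge k$ for every $u\in V(G)$, where $N_G(u)$ is the open neighborhood; $\gamma_{\times k,t}(G)$ is the minimum cardinality of such a set. It is defined only when the minimum degree of $G$ is at least $k$; the minimum degree of $K(n,r)$ is $\binom{n-r}{r}$. *)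

theory Defs
  imports Main
begin

definition kneser_vertices :: "nat \<Rightarrow> nat \<Rightarrow> nat set set" where
  "kneser_vertices n r = {A. A \<subseteq> {1..n} \<and> card A = r}"

definition kneser_nbhd :: "nat \<Rightarrow> nat \<Rightarrow> nat set \<Rightarrow> nat set set" where
  "kneser_nbhd n r u = {v \<in> kneser_vertices n r. u \<inter> v = {}}"

definition kneser_ktuple_tdom :: "nat \<Rightarrow> nat \<Rightarrow> nat \<Rightarrow> nat set set \<Rightarrow> bool" where
  "kneser_ktuple_tdom n r k D \<longleftrightarrow> D \<subseteq> kneser_vertices n r \<and>
     (\<forall>u \<in> kneser_vertices n r. card (kneser_nbhd n r u \<inter> D) \<ge> k)"

definition gamma_ktuple_t_kneser :: "nat \<Rightarrow> nat \<Rightarrow> nat \<Rightarrow> nat" where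
  "gamma_ktuple_t_kneser n r k = (LEAST m. \<exists>D. kneser_ktuple_tdom n r k D \<and> card D = m)"

end

theory Submission
  imports Defs
begin

lemma fin_nbhd: "finite (kneser_nbhd n r u)"
proof -
  have "kneser_nbhd n r u \<subseteq> Pow {1..n}"
    by (auto simp: kneser_nbhd_def kneser_vertices_def)
  thus ?thesis by (rule finite_subset) simp
qed

lemma tdom_mono:
  assumes D: "kneser_ktuple_tdom n r k D" and nr: "n \<ge> r"
  shows "kneser_ktuple_tdom (n + 1) r k D"
  unfolding kneser_ktuple_tdom_def
proof (intro conjI ballI)
  show "D \<subseteq> kneser_vertices (n + 1) r"
    using D unfolding kneser_ktuple_tdom_def kneser_vertices_def by fastforce
next
  fix u assume u: "u \<in> kneser_vertices (n + 1) r"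
  have Dv: "D \<subseteq> kneser_vertices n r" and Dk: "\<And>w. w \<in> kneser_vertices n r \<Longrightarrow> k \<le> card (kneser_nbhd n r w \<inter> D)"
    using D by (auto simp: kneser_ktuple_tdom_def)
  obtain w where w: "w \<in> kneser_vertices n r" and sub: "kneser_nbhd n r w \<inter> D \<subseteq> kneser_nbhd (n+1) r u \<inter> D"
  proof (cases "n + 1 \<in> u")
    case False
    then have "u \<in> kneser_vertices n r" using u
      unfolding kneser_vertices_def by (auto simp: subset_iff) (metis atLeastAtMost_iff le_Suc_eq)
    moreover have "kneser_nbhd n r u \<inter> D \<subseteq> kneser_nbhd (n+1) r u \<inter> D"
      by (auto simp: kneser_nbhd_def kneser_vertices_def)
    ultimately show ?thesis using that by blast
  next
    case True
    define u0 where "u0 = u - {n+1}"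
    have fu: "finite u" using u by (auto simp: kneser_vertices_def intro: finite_subset)
    have cu0: "card u0 = r - 1" using u True fu by (simp add: u0_def kneser_vertices_def)
    have u0s: "u0 \<subseteq> {1..n}" using u by (auto simp: u0_def kneser_vertices_def)
    have "card u0 < card {1..n}" using cu0 nr u True fu by (cases r) (auto simp: kneser_vertices_def)
    then have "\<not> {1..n} \<subseteq> u0" using card_mono[of u0 "{1..n}"] u0s finite_subset[OF u0s] by auto
    then obtain x where x: "x \<in> {1..n}" "x \<notin> u0" by blast
    define w where "w = insert x u0"
    have fu0: "finite u0" using u0s finite_subset by blast
    have "card w = r" using cu0 x fu0 u True fu unfolding w_def
      by (cases r) (auto simp: kneser_vertices_def u0_def)
    then have "w \<in> kneser_vertices n r" using u0s x by (auto simp: w_def kneser_vertices_def)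
    moreover have "kneser_nbhd n r w \<inter> D \<subseteq> kneser_nbhd (n+1) r u \<inter> D"
    proof
      fix v assume v: "v \<in> kneser_nbhd n r w \<inter> D"
      then have "v \<subseteq> {1..n}" "card v = r" "w \<inter> v = {}" "v \<in> D"
        by (auto simp: kneser_nbhd_def kneser_vertices_def)
      moreover have "u \<subseteq> insert (n+1) w" by (auto simp: w_def u0_def)
      moreover have "n+1 \<notin> v" using \<open>v \<subseteq> {1..n}\<close> by auto
      ultimately have "u \<inter> v = {}" by blast
      moreover have "v \<subseteq> {1..n+1}" using \<open>v \<subseteq> {1..n}\<close> by auto
      ultimately show "v \<in> kneser_nbhd (n+1) r u \<inter> D"
        unfolding kneser_nbhd_def kneser_vertices_def using \<open>card v = r\<close> \<open>v \<in> D\<close> by blast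
    qed
    ultimately show ?thesis using that by blast
  qed
  have "k \<le> card (kneser_nbhd n r w \<inter> D)" using Dk w .
  also have "\<dots> \<le> card (kneser_nbhd (n+1) r u \<inter> D)"
    by (rule card_mono[OF _ sub]) (simp add: fin_nbhd)
  finally show "k \<le> card (kneser_nbhd (n + 1) r u \<inter> D)" .
qed

lemma nbhd_card:
  assumes "u \<in> kneser_vertices n r"
  shows "card (kneser_nbhd n r u) = (n - r) choose r"
proof -
  have fu: "finite u" and us: "u \<subseteq> {1..n}" and cu: "card u = r"
    using assms by (auto simp: kneser_vertices_def intro: finite_subset)
  have "kneser_nbhd n r u = {v. v \<subseteq> {1..n} - u \<and> card v = r}"
    by (auto simp: kneser_nbhd_def kneser_vertices_def)
  moreover have "card ({1..n} - u) = n - r" using us cu fu by (simp add: card_Diff_subset)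
  ultimately show ?thesis using n_subsets[of "{1..n} - u" r] by simp
qed

theorem theorem2p1:
  fixes n r k :: nat
  assumes "r \<ge> 1" and "k \<ge> 1" and "n \<ge> 2 * r + 1"
    and "(n - r) choose r \<ge> k"
  shows "gamma_ktuple_t_kneser n r k \<ge> gamma_ktuple_t_kneser (n + 1) r k"
proof -
  have V: "kneser_ktuple_tdom n r k (kneser_vertices n r)"
    unfolding kneser_ktuple_tdom_def
  proof (intro conjI ballI)
    fix u assume u: "u \<in> kneser_vertices n r"
    have "kneser_nbhd n r u \<inter> kneser_vertices n r = kneser_nbhd n r u"
      by (auto simp: kneser_nbhd_def)
    then show "k \<le> card (kneser_nbhd n r u \<inter> kneser_vertices n r)"
      using nbhd_card[OF u] assms(4) by simp
  qed simp
  let ?P = "\<lambda>m. \<exists>D. kneser_ktuple_tdom n r k D \<and> card D = m"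
  have "?P (LEAST m. ?P m)" by (rule LeastI[of ?P]) (use V in blast)
  then obtain D where D: "kneser_ktuple_tdom n r k D" and cD: "card D = gamma_ktuple_t_kneser n r k"
    unfolding gamma_ktuple_t_kneser_def by blast
  have "kneser_ktuple_tdom (n+1) r k D" using tdom_mono[OF D] assms(3) by simp
  then have "gamma_ktuple_t_kneser (n+1) r k \<le> card D"
    unfolding gamma_ktuple_t_kneser_def by (intro Least_le) blast
  then show ?thesis using cD by simp
qed

end
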